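(* Let $n\ge 3$ and let $C_n$ be the cycle graph on $n$ vertices. Then $hH_*^0(C_n)\cong H_*(\mathcal{M}(C_n))$, $hH_i^1(C_n)$ is $\mathbb{F}_2^2$ for $i=n-1$ and $0$ otherwise, and $hH_*^j(C_n)=0$ for $j\ge2$.
   Context: A finite simple graph $G$ is regarded as a simplicial complex of dimension at most $1$; its face poset $\mathcal{F}(G)$ is the directed graph with vertices the vertices and edges of $G$ and a directed edge $e\to v$ whenever $v$ is an endpoint of $e$. A matching on $\mathcal{F}(G)$ is a set $m$ of its edges, no two sharing an endpoint. Given $m$, reversing every edge of $m$ in $\mathcal{F}(G)$ gives a directed graph whose directed cycles (closed directed paths without repeated vertices) are said to be supported by $m$; $J(m)$ is their number, and $m$ is acyclic if $J(m)=0$. The matching complex $\mathrm{M}(G)$ has vertex set the edges of $\mathcal{F}(G)$ and simplices the nonempty matchings; $\mathcal{M}(G)$ is the subcomplex of nonempty acyclic matchings. Let $\widehat{C}_i^j(G)$ be the $\mathbb{F}_2$-vector space with basis the $i$-dimensional simplices (matchings with $i+1$ edges) $m$ with $J(m)=j$, and $\partial_J(m)$ the mod-2 sum of the sub-matchings $m\setminus\{e\}$ (for $e\in m$, $|m|\ge2$) with $J(m\setminus\{e\})=J(m)$. $hH_i^j(G)$ is the homology of $(\bigoplus\widehat{C}(G),\partial_J)$ in homological degree $i$ and filtration degree $j$. $H_*$ denotes simplicial homology with $\mathbb{F}_2$ coefficients. *)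

theory Defs
  imports Main
begin

text \<open>Finite simple graphs: vertex set V, edge set E of two-element subsets of V.
Faces of G as a simplicial complex: a vertex v is represented by the face {v},
an edge by the two-element set e itself.\<close>

type_synonym face = "nat set"
type_synonym arc = "face \<times> face"

definition cycV :: "nat \<Rightarrow> nat set" where
  "cycV n = {..<n}"

definition cycE :: "nat \<Rightarrow> nat set set" where
  "cycE n = {{i, Suc i mod n} | i. i < n}"

definition fp_arcs :: "nat set set \<Rightarrow> arc set" where
  "fp_arcs E = {(e, {v}) | e v. e \<in> E \<and> v \<in> e}"

definition is_matching :: "arc set \<Rightarrow> arc set \<Rightarrow> bool" where
  "is_matching A m \<longleftrightarrow> m \<subseteq> A \<and>
     (\<forall>a\<in>m. \<forall>b\<in>m. a \<noteq> b \<longrightarrow>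
        fst a \<noteq> fst b \<and> fst a \<noteq> snd b \<and> snd a \<noteq> fst b \<and> snd a \<noteq> snd b)"

definition reversed :: "arc set \<Rightarrow> arc set \<Rightarrow> arc set" where
  "reversed A m = (A - m) \<union> {(y, x) | x y. (x, y) \<in> m}"

definition cyc_arcs :: "'a list \<Rightarrow> ('a \<times> 'a) set" where
  "cyc_arcs xs = {(xs ! k, xs ! (Suc k mod length xs)) | k. k < length xs}"

text \<open>Directed cycles (closed directed paths without repeated vertices) of a digraph
with arc set D, each identified with its set of arcs.\<close>
definition dcycles :: "('a \<times> 'a) set \<Rightarrow> ('a \<times> 'a) set set" where
  "dcycles D = {cyc_arcs xs | xs. xs \<noteq> [] \<and> distinct xs \<and> cyc_arcs xs \<subseteq> D}"

definition Jnum :: "arc set \<Rightarrow> arc set \<Rightarrow> nat" where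
  "Jnum A m = card (dcycles (reversed A m))"

definition match_simplices :: "arc set \<Rightarrow> arc set set" where
  "match_simplices A = {m. m \<noteq> {} \<and> is_matching A m}"

definition acyc_simplices :: "arc set \<Rightarrow> arc set set" where
  "acyc_simplices A = {m \<in> match_simplices A. Jnum A m = 0}"

definition symdiff :: "'a set \<Rightarrow> 'a set \<Rightarrow> 'a set" where
  "symdiff X Y = (X - Y) \<union> (Y - X)"

text \<open>F2-linear extension of a boundary map given on basis simplices; chains over F2
are finite sets of simplices, addition is symmetric difference.\<close>
definition lin :: "('s \<Rightarrow> 's set) \<Rightarrow> 's set \<Rightarrow> 's set" where
  "lin bd c = {x. odd (card {s \<in> c. x \<in> bd s})}"

text \<open>Homology (with F2 coefficients) in degree i of the chain complex with basis S,
where a simplex s has degree card s - 1, and boundary bd: the set of cosets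
z + B_i of the space of boundaries B_i, for z in the cycles Z_i.\<close>
definition homology :: "'a set set \<Rightarrow> ('a set \<Rightarrow> 'a set set) \<Rightarrow> nat \<Rightarrow> 'a set set set set" where
  "homology S bd i =
     (let Z = {c. c \<subseteq> {s \<in> S. card s = Suc i} \<and> lin bd c = {}};
          B = lin bd ` Pow {s \<in> S. card s = Suc (Suc i)}
      in (\<lambda>z. (\<lambda>b. symdiff z b) ` B) ` Z)"

definition simp_bd :: "'a set \<Rightarrow> 'a set set" where
  "simp_bd m = {m - {e} | e. e \<in> m \<and> card m \<ge> 2}"

definition simp_homology :: "'a set set \<Rightarrow> nat \<Rightarrow> 'a set set set set" where
  "simp_homology K i = homology K simp_bd i"

definition bdJ :: "arc set \<Rightarrow> arc set \<Rightarrow> arc set set" where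
  "bdJ A m = {m - {e} | e. e \<in> m \<and> card m \<ge> 2 \<and> Jnum A (m - {e}) = Jnum A m}"

definition hH :: "nat set set \<Rightarrow> nat \<Rightarrow> nat \<Rightarrow> arc set set set set" where
  "hH E i j = homology {m \<in> match_simplices (fp_arcs E). Jnum (fp_arcs E) m = j} (bdJ (fp_arcs E)) i"

end

theory Submission imports Defs begin

definition ed :: "nat \<Rightarrow> nat \<Rightarrow> nat set" where
  "ed n k = {k, Suc k mod n}"

lemma cyc_arcs_mem: "(a,b) \<in> cyc_arcs xs \<Longrightarrow> a \<in> set xs \<and> b \<in> set xs"
proof -
  assume "(a,b) \<in> cyc_arcs xs"
  then obtain k where k: "k < length xs" "a = xs ! k" "b = xs ! (Suc k mod length xs)"
    unfolding cyc_arcs_def by blast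
  have "0 < length xs" using k(1) by linarith
  hence "Suc k mod length xs < length xs" by simp
  thus ?thesis using k by simp
qed

lemma cyc_succ: assumes "x \<in> set xs" shows "\<exists>y. (x,y) \<in> cyc_arcs xs"
proof -
  obtain k where k: "k < length xs" "xs ! k = x" using assms by (auto simp: in_set_conv_nth)
  thus ?thesis unfolding cyc_arcs_def by auto
qed

lemma cyc_pred: assumes "x \<in> set xs" shows "\<exists>p. (p,x) \<in> cyc_arcs xs"
proof -
  obtain k where k: "k < length xs" "xs ! k = x" using assms by (auto simp: in_set_conv_nth)
  show ?thesis
  proof (cases k)
    case 0
    have "(xs ! (length xs - 1), xs ! (Suc (length xs - 1) mod length xs)) \<in> cyc_arcs xs"
      unfolding cyc_arcs_def using k by auto
    moreover have "Suc (length xs - 1) = length xs" using k by simp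
    hence "Suc (length xs - 1) mod length xs = 0" by simp
    ultimately show ?thesis using k 0 by auto
  next
    case (Suc j)
    have "(xs ! j, xs ! (Suc j mod length xs)) \<in> cyc_arcs xs"
      unfolding cyc_arcs_def using k Suc by auto
    thus ?thesis using k Suc by auto
  qed
qed

lemma match_fst: "is_matching A m \<Longrightarrow> a \<in> m \<Longrightarrow> b \<in> m \<Longrightarrow> fst a = fst b \<Longrightarrow> a = b"
  unfolding is_matching_def by blast
lemma match_snd: "is_matching A m \<Longrightarrow> a \<in> m \<Longrightarrow> b \<in> m \<Longrightarrow> snd a = snd b \<Longrightarrow> a = b"
  unfolding is_matching_def by blast

lemma rev_mem: "(x,y) \<in> reversed A m \<longleftrightarrow> ((x,y) \<in> A \<and> (x,y) \<notin> m) \<or> (y,x) \<in> m"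
  unfolding reversed_def by auto

lemma exists_cycle:
  assumes fin: "finite N" and ne: "x0 \<in> N" and out: "\<forall>x\<in>N. \<exists>y\<in>N. (x,y)\<in>D"
  shows "\<exists>xs. xs \<noteq> [] \<and> distinct xs \<and> cyc_arcs xs \<subseteq> D"
proof -
  define f where "f x = (SOME y. y \<in> N \<and> (x,y) \<in> D)" for x
  have fN: "x \<in> N \<Longrightarrow> f x \<in> N \<and> (x, f x) \<in> D" for x
    unfolding f_def using out by (metis (mono_tags, lifting) someI_ex)
  define g where "g k = (f ^^ k) x0" for k
  have gN: "g k \<in> N" for k by (induction k) (auto simp: g_def ne fN)
  have gS: "g (Suc k) = f (g k)" for k by (simp add: g_def)
  have "\<not> inj_on g {..card N}"
  proof
    assume "inj_on g {..card N}"
    hence "card (g ` {..card N}) = Suc (card N)" by (simp add: card_image)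
    moreover have "card (g ` {..card N}) \<le> card N" using gN fin by (intro card_mono) auto
    ultimately show False by simp
  qed
  then obtain a b where ab: "a \<noteq> b" "g a = g b" unfolding inj_on_def by blast
  define P where "P j = (\<exists>i<j. g i = g j)" for j
  have "P (max a b)" using ab unfolding P_def
    by (cases "a < b") (auto simp: max_def intro: exI[of _ a] exI[of _ b])
  hence Pj: "P (LEAST j. P j)" by (rule LeastI)
  define j where "j = (LEAST j. P j)"
  obtain i where ij: "i < j" "g i = g j" using Pj unfolding P_def j_def by blast
  have minj: "\<And>j' i'. j' < j \<Longrightarrow> i' < j' \<Longrightarrow> g i' \<noteq> g j'"
    using not_less_Least unfolding P_def j_def by blast
  define xs where "xs = map g [i..<j]"
  have len: "length xs = j - i" by (simp add: xs_def)
  have nth: "k < j - i \<Longrightarrow> xs ! k = g (i + k)" for k by (simp add: xs_def)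
  have "distinct xs" unfolding xs_def distinct_map
  proof
    show "inj_on g (set [i..<j])"
      unfolding inj_on_def
    proof (intro ballI impI)
      fix a b assume "a \<in> set [i..<j]" "b \<in> set [i..<j]" "g a = g b"
      then show "a = b" using minj[of a b] minj[of b a] by (cases "a < b"; cases "b < a") auto
    qed
  qed simp
  moreover have "cyc_arcs xs \<subseteq> D"
  proof
    fix p assume "p \<in> cyc_arcs xs"
    then obtain k where k: "k < length xs" "p = (xs ! k, xs ! (Suc k mod length xs))"
      unfolding cyc_arcs_def by blast
    have "xs ! (Suc k mod length xs) = f (xs ! k)"
    proof (cases "Suc k < j - i")
      case True thus ?thesis using k len nth gS by simp
    next
      case False
      hence "Suc k = j - i" using k len by simp
      hence "Suc k mod length xs = 0" "j = Suc (i + k)" using len ij by auto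
      thus ?thesis using k len nth ij gS by auto
    qed
    moreover have "xs ! k \<in> N" using k len nth gN by simp
    ultimately show "p \<in> D" using k fN by simp
  qed
  moreover have "xs \<noteq> []" using len ij by auto
  ultimately show ?thesis by blast
qed

definition mp :: "nat \<Rightarrow> arc set" where "mp n = (\<lambda>k. (ed n k, {k})) ` {..<n}"
definition mm :: "nat \<Rightarrow> arc set" where "mm n = (\<lambda>k. (ed n k, {Suc k mod n})) ` {..<n}"

context fixes n :: nat assumes n3: "3 \<le> n" begin

lemma sk_eq: "k < n \<Longrightarrow> Suc k mod n = (if Suc k = n then 0 else Suc k)"
  by auto

lemma sk_ne: "k < n \<Longrightarrow> Suc k mod n \<noteq> k"
  using n3 by (auto simp: sk_eq)

lemma sk_lt: "Suc k mod n < n" using n3 by simp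

lemma sk_inj: "j < n \<Longrightarrow> k < n \<Longrightarrow> Suc j mod n = Suc k mod n \<Longrightarrow> j = k"
  using n3 by (auto simp: sk_eq split: if_splits)

lemma ed_inj: assumes "j < n" "k < n" "ed n j = ed n k" shows "j = k"
proof (rule ccontr)
  assume ne: "j \<noteq> k"
  from assms(3) ne have "j = Suc k mod n" "Suc j mod n = k" unfolding ed_def
    by (auto simp: doubleton_eq_iff)
  thus False using assms(1,2) n3 by (auto simp: sk_eq split: if_splits)
qed

lemma sing_ne_ed: "k < n \<Longrightarrow> {v} \<noteq> ed n k"
proof
  assume k: "k < n" and e: "{v} = ed n k"
  have "k \<in> {v}" "Suc k mod n \<in> {v}" unfolding e ed_def by auto
  thus False using sk_ne[OF k] by simp
qed

lemma mem_ed: "v \<in> ed n k \<longleftrightarrow> v = k \<or> v = Suc k mod n"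
  unfolding ed_def by auto

lemma cycE_ed: "cycE n = ed n ` {..<n}"
  unfolding cycE_def ed_def by auto

lemma fpA: "(x,y) \<in> fp_arcs (cycE n) \<longleftrightarrow> (\<exists>k<n. x = ed n k \<and> (y = {k} \<or> y = {Suc k mod n}))"
  unfolding fp_arcs_def cycE_ed by (auto simp: mem_ed)

lemma finA: "finite (fp_arcs (cycE n))"
proof -
  have "fp_arcs (cycE n) \<subseteq> (ed n ` {..<n}) \<times> ((\<lambda>v. {v}) ` {..<n})"
    using sk_lt by (auto simp: fpA)
  thus ?thesis by (rule finite_subset) auto
qed

lemma vert_edge: assumes "k < n" "k' < n" "v \<in> ed n k" "v \<in> ed n k'" "k \<noteq> k'"
  shows "k = v \<or> k' = v"
proof (rule ccontr)
  assume "\<not> (k = v \<or> k' = v)"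
  hence "v = Suc k mod n" "v = Suc k' mod n" using assms(3,4) unfolding mem_ed by auto
  hence "k = k'" using sk_inj[OF assms(1,2)] by simp
  thus False using assms(5) by simp
qed

abbreviation "AA \<equiv> fp_arcs (cycE n)"

context fixes m :: "arc set" and xs :: "face list"
  assumes mt: "is_matching AA m" and xsne: "xs \<noteq> []"
    and xsD: "cyc_arcs xs \<subseteq> reversed AA m"
begin

lemma mA: "m \<subseteq> AA" using mt unfolding is_matching_def by auto

lemma arcD: "(a,b) \<in> cyc_arcs xs \<Longrightarrow> ((a,b) \<in> AA \<and> (a,b) \<notin> m) \<or> (b,a) \<in> m"
  using xsD rev_mem by blast

lemma S1: assumes "{v} \<in> set xs"
  shows "\<exists>k<n. (ed n k, {v}) \<in> m \<and> ed n k \<in> set xs \<and> v \<in> ed n k"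
proof -
  obtain y where y: "({v},y) \<in> cyc_arcs xs" using cyc_succ[OF assms] by blast
  have yin: "y \<in> set xs" using cyc_arcs_mem[OF y] by blast
  from arcD[OF y] show ?thesis
  proof
    assume "({v}, y) \<in> AA \<and> ({v}, y) \<notin> m"
    then show ?thesis using sing_ne_ed by (auto simp: fpA)
  next
    assume ym: "(y, {v}) \<in> m"
    then have "(y,{v}) \<in> AA" using mA by auto
    then obtain k where "k<n" "y = ed n k" "v \<in> ed n k" by (auto simp: fpA mem_ed)
    thus ?thesis using ym yin by auto
  qed
qed

lemma S2: assumes "{v} \<in> set xs"
  shows "\<exists>k<n. (ed n k, {v}) \<notin> m \<and> ed n k \<in> set xs \<and> v \<in> ed n k"
proof -
  obtain y where y: "(y,{v}) \<in> cyc_arcs xs" using cyc_pred[OF assms] by blast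
  have yin: "y \<in> set xs" using cyc_arcs_mem[OF y] by blast
  from arcD[OF y] show ?thesis
  proof
    assume h: "(y, {v}) \<in> AA \<and> (y, {v}) \<notin> m"
    then obtain k where "k<n" "y = ed n k" "v \<in> ed n k" by (auto simp: fpA mem_ed)
    thus ?thesis using h yin by auto
  next
    assume ym: "({v}, y) \<in> m"
    then have "({v},y) \<in> AA" using mA by auto
    then show ?thesis using sing_ne_ed by (auto simp: fpA)
  qed
qed

lemma S12: assumes "{v} \<in> set xs" "v < n" shows "ed n v \<in> set xs"
proof -
  obtain k1 where k1: "k1<n" "(ed n k1, {v}) \<in> m" "ed n k1 \<in> set xs" "v \<in> ed n k1"
    using S1[OF assms(1)] by blast
  obtain k2 where k2: "k2<n" "(ed n k2, {v}) \<notin> m" "ed n k2 \<in> set xs" "v \<in> ed n k2"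
    using S2[OF assms(1)] by blast
  have "k1 \<noteq> k2" using k1 k2 by auto
  hence "k1 = v \<or> k2 = v" using vert_edge k1 k2 by blast
  thus ?thesis using k1 k2 by auto
qed

lemma S3a: assumes "ed n k \<in> set xs" "k < n"
  shows "\<exists>w. (ed n k, {w}) \<in> m \<and> {w} \<in> set xs \<and> w \<in> ed n k"
proof -
  obtain y where y: "(y, ed n k) \<in> cyc_arcs xs" using cyc_pred[OF assms(1)] by blast
  have yin: "y \<in> set xs" using cyc_arcs_mem[OF y] by blast
  from arcD[OF y] show ?thesis
  proof
    assume h: "(y, ed n k) \<in> AA \<and> (y, ed n k) \<notin> m"
    then obtain j where "ed n k = {j} \<or> ed n k = {Suc j mod n}" by (auto simp: fpA)
    thus ?thesis using sing_ne_ed[OF assms(2), of j] sing_ne_ed[OF assms(2), of "Suc j mod n"] by auto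
  next
    assume ym: "(ed n k, y) \<in> m"
    then have "(ed n k, y) \<in> AA" using mA by auto
    then obtain j where "j<n" "ed n k = ed n j" "y = {j} \<or> y = {Suc j mod n}" by (auto simp: fpA)
    moreover then have "j = k" using ed_inj assms(2) by metis
    ultimately show ?thesis using ym yin by (auto simp: mem_ed)
  qed
qed

lemma S3b: assumes "ed n k \<in> set xs" "k < n"
  shows "\<exists>u. (ed n k, {u}) \<notin> m \<and> (ed n k, {u}) \<in> cyc_arcs xs \<and> {u} \<in> set xs \<and> u \<in> ed n k"
proof -
  obtain y where y: "(ed n k, y) \<in> cyc_arcs xs" using cyc_succ[OF assms(1)] by blast
  have yin: "y \<in> set xs" using cyc_arcs_mem[OF y] by blast
  from arcD[OF y] show ?thesis
  proof
    assume h: "(ed n k, y) \<in> AA \<and> (ed n k, y) \<notin> m"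
    then obtain j where "j<n" "ed n k = ed n j" "y = {j} \<or> y = {Suc j mod n}" by (auto simp: fpA)
    moreover then have "j = k" using ed_inj assms(2) by metis
    ultimately show ?thesis using h y yin by (auto simp: mem_ed)
  next
    assume ym: "(y, ed n k) \<in> m"
    then have "(y, ed n k) \<in> AA" using mA by auto
    then obtain j where "ed n k = {j} \<or> ed n k = {Suc j mod n}" by (auto simp: fpA)
    thus ?thesis using sing_ne_ed[OF assms(2), of j] sing_ne_ed[OF assms(2), of "Suc j mod n"] by auto
  qed
qed

lemma S3: assumes "ed n k \<in> set xs" "k < n" shows "{Suc k mod n} \<in> set xs"
proof -
  obtain w where w: "(ed n k, {w}) \<in> m" "{w} \<in> set xs" "w \<in> ed n k" using S3a[OF assms] by blast
  obtain u where u: "(ed n k, {u}) \<notin> m" "{u} \<in> set xs" "u \<in> ed n k" using S3b[OF assms] by blast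
  have "u \<noteq> w" using u w by auto
  thus ?thesis using u w by (auto simp: mem_ed)
qed

lemma start: "\<exists>v<n. {v} \<in> set xs"
proof -
  have h: "hd xs \<in> set xs" using xsne by simp
  obtain y where y: "(hd xs, y) \<in> cyc_arcs xs" using cyc_succ[OF h] by blast
  have yin: "y \<in> set xs" using cyc_arcs_mem[OF y] by blast
  from arcD[OF y] show ?thesis
  proof
    assume "(hd xs, y) \<in> AA \<and> (hd xs, y) \<notin> m"
    then obtain k where k: "k<n" "y = {k} \<or> y = {Suc k mod n}" by (auto simp: fpA)
    show ?thesis
    proof (cases "y = {k}")
      case True thus ?thesis using yin k by blast
    next
      case False
      have "Suc k mod n < n" by (rule sk_lt)
      thus ?thesis using yin k False by blast
    qed
  next
    assume "(y, hd xs) \<in> m"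
    then have "(y, hd xs) \<in> AA" using mA by auto
    then obtain k where k: "k<n" "hd xs = {k} \<or> hd xs = {Suc k mod n}" by (auto simp: fpA)
    show ?thesis
    proof (cases "hd xs = {k}")
      case True thus ?thesis using h k by metis
    next
      case False
      have "Suc k mod n < n" by (rule sk_lt)
      thus ?thesis using h k False by metis
    qed
  qed
qed

lemma all_in: "v < n \<Longrightarrow> {v} \<in> set xs"
proof -
  obtain v0 where v0: "v0 < n" "{v0} \<in> set xs" using start by blast
  have step: "{(v0 + j) mod n} \<in> set xs" for j
  proof (induction j)
    case 0 then show ?case using v0 by simp
  next
    case (Suc j)
    have "ed n ((v0 + j) mod n) \<in> set xs" using S12[OF Suc] n3 by simp
    from S3[OF this] n3 have "{Suc ((v0 + j) mod n) mod n} \<in> set xs" by simp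
    thus ?case by (simp add: mod_Suc_eq)
  qed
  assume "v < n"
  have "(v0 + (v + n - v0)) mod n = v" using v0 \<open>v<n\<close> by simp
  thus "{v} \<in> set xs" using step[of "v + n - v0"] by simp
qed

lemma all_ed: "k < n \<Longrightarrow> ed n k \<in> set xs"
  using S12 all_in by blast

lemma M2: "k < n \<Longrightarrow> \<exists>w. (ed n k, {w}) \<in> m \<and> w \<in> ed n k"
  using S3a all_ed by blast

lemma uniq: assumes "(x,y) \<in> reversed AA m" "(x,y') \<in> reversed AA m" shows "y = y'"
proof -
  have c: "((x,z) \<in> AA \<and> (x,z) \<notin> m) \<or> (z,x) \<in> m" if "(x,z) \<in> reversed AA m" for z
    using that rev_mem by blast
  show ?thesis
  proof (cases "\<exists>k<n. x = ed n k")
    case True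
    then obtain k where k: "k<n" "x = ed n k" by blast
    obtain w where w: "(ed n k, {w}) \<in> m" "w \<in> ed n k" using M2[OF k(1)] by blast
    have key: "\<exists>u. z = {u} \<and> u \<in> ed n k \<and> u \<noteq> w" if "(x,z) \<in> reversed AA m" for z
    proof -
      from c[OF that] show ?thesis
      proof
        assume h: "(x, z) \<in> AA \<and> (x, z) \<notin> m"
        then obtain j where j: "j<n" "ed n k = ed n j" "z = {j} \<or> z = {Suc j mod n}" using k by (auto simp: fpA)
        have "j = k" using ed_inj[OF j(1) k(1)] j(2) by simp
        then obtain u where u: "z = {u}" "u \<in> ed n k" using j(3) by (auto simp: mem_ed)
        have "u \<noteq> w"
        proof
          assume "u = w" thus False using h w(1) u(1) k(2) by simp
        qed
        thus ?thesis using u by blast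
      next
        assume "(z,x) \<in> m" then have "(z,x) \<in> AA" using mA by auto
        then obtain j where "ed n k = {j} \<or> ed n k = {Suc j mod n}" using k by (auto simp: fpA)
        thus ?thesis using sing_ne_ed[OF k(1), of j] sing_ne_ed[OF k(1), of "Suc j mod n"] by auto
      qed
    qed
    obtain u where u: "y = {u}" "u \<in> ed n k" "u \<noteq> w" using key[OF assms(1)] by blast
    obtain u' where u': "y' = {u'}" "u' \<in> ed n k" "u' \<noteq> w" using key[OF assms(2)] by blast
    have "u = u'" using u(2,3) u'(2,3) w(2) unfolding mem_ed by auto
    thus ?thesis using u u' by simp
  next
    case False
    have mz: "(z,x) \<in> m" if "(x,z) \<in> reversed AA m" for z
    proof -
      from c[OF that] show ?thesis
      proof
        assume "(x, z) \<in> AA \<and> (x, z) \<notin> m"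
        hence "\<exists>k<n. x = ed n k" by (auto simp: fpA)
        with False show ?thesis by blast
      qed
    qed
    have m1: "(y,x) \<in> m" using mz assms(1) .
    have m2: "(y',x) \<in> m" using mz assms(2) .
    show ?thesis using match_snd[OF mt m1 m2] by simp
  qed
qed

lemma nodes: assumes "(x,y) \<in> reversed AA m" shows "x \<in> set xs"
proof -
  from assms have "((x,y) \<in> AA \<and> (x,y) \<notin> m) \<or> (y,x) \<in> m" by (simp add: rev_mem)
  thus ?thesis
  proof
    assume "(x,y) \<in> AA \<and> (x,y) \<notin> m"
    then obtain k where "k < n" "x = ed n k" by (auto simp: fpA)
    thus ?thesis using all_ed by simp
  next
    assume "(y,x) \<in> m"
    hence "(y,x) \<in> AA" using mA by auto
    then obtain k where "k < n" "x = {k} \<or> x = {Suc k mod n}" by (auto simp: fpA)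
    thus ?thesis using all_in[of k] all_in[of "Suc k mod n"] sk_lt[of k] by blast
  qed
qed

lemma cyc_eq: "cyc_arcs xs = reversed AA m"
proof (rule equalityI)
  show "cyc_arcs xs \<subseteq> reversed AA m" by (rule xsD)
  show "reversed AA m \<subseteq> cyc_arcs xs"
  proof (rule subrelI)
    fix x y assume p': "(x,y) \<in> reversed AA m"
    have xin: "x \<in> set xs" by (rule nodes[OF p'])
    obtain y' where y': "(x,y') \<in> cyc_arcs xs" using cyc_succ[OF xin] by blast
    have "(x,y') \<in> reversed AA m" using y' xsD by blast
    hence "y = y'" by (rule uniq[OF p'])
    thus "(x,y) \<in> cyc_arcs xs" using y' by simp
  qed
qed

end

lemma finRev: "m \<subseteq> AA \<Longrightarrow> finite (reversed AA m)"
proof -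
  assume "m \<subseteq> AA"
  hence fm: "finite m" using finA finite_subset by blast
  have "reversed AA m \<subseteq> AA \<union> (\<lambda>(x,y). (y,x)) ` m" unfolding reversed_def by force
  thus ?thesis using fm finA by (meson finite_UnI finite_imageI finite_subset)
qed

lemma dcyc_sub: assumes "is_matching AA m" shows "dcycles (reversed AA m) \<subseteq> {reversed AA m}"
  unfolding dcycles_def using cyc_eq[OF assms] by blast

lemma J_le: assumes "is_matching AA m" shows "Jnum AA m \<le> 1"
proof -
  have "card (dcycles (reversed AA m)) \<le> card {reversed AA m}"
    using dcyc_sub[OF assms] by (intro card_mono) auto
  thus ?thesis unfolding Jnum_def by simp
qed

lemma J1_M2: assumes mt: "is_matching AA m" "Jnum AA m = 1"
  shows "\<forall>k<n. \<exists>w. (ed n k, {w}) \<in> m \<and> w \<in> ed n k"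
proof -
  have "dcycles (reversed AA m) \<noteq> {}" using assms(2) unfolding Jnum_def by auto
  then obtain xs where "xs \<noteq> []" "cyc_arcs xs \<subseteq> reversed AA m" unfolding dcycles_def by blast
  thus ?thesis using M2[OF mt(1)] by blast
qed

lemma perfect: assumes mt: "is_matching AA m" and M: "\<forall>k<n. \<exists>w. (ed n k, {w}) \<in> m \<and> w \<in> ed n k"
  shows "m = mp n \<or> m = mm n"
proof -
  have n0: "0 < n" using n3 by simp
  have mA': "m \<subseteq> AA" using mt unfolding is_matching_def by auto
  define P where "P k = ((ed n (k mod n), {Suc k mod n}) \<in> m)" for k
  have step: "P k \<Longrightarrow> P (Suc k)" for k
  proof -
    assume pk: "P k"
    define a where "a = k mod n"
    define b where "b = Suc a mod n"
    have a: "a < n" "b < n" using n0 by (auto simp: a_def b_def)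
    have bS: "b = Suc k mod n" by (simp add: a_def b_def mod_Suc_eq)
    obtain w where w: "(ed n b, {w}) \<in> m" "w = b \<or> w = Suc b mod n"
      using M a(2) by (auto simp: mem_ed)
    have "w \<noteq> b"
    proof
      assume "w = b"
      hence "(ed n a, {b}) = (ed n b, {b})" using match_snd[OF mt _ w(1)] pk
        unfolding P_def a_def b_def using \<open>w = b\<close> by (simp add: mod_Suc_eq)
      hence "a = b" using ed_inj[OF a] by simp
      thus False using sk_ne[OF a(1)] b_def by simp
    qed
    hence "w = Suc b mod n" using w by simp
    thus "P (Suc k)" using w(1) bS unfolding P_def by (simp add: mod_Suc_eq)
  qed
  have stepj: "P k \<Longrightarrow> P (k + j)" for k j by (induction j) (auto intro: step)
  have mfst: "\<And>x y. (x,y) \<in> m \<Longrightarrow> \<exists>k<n. x = ed n k" using mA' fpA by blast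
  show ?thesis
  proof (cases "\<exists>k0<n. P k0")
    case True
    then obtain k0 where k0: "k0 < n" "P k0" by blast
    have all: "(ed n k, {Suc k mod n}) \<in> m" if "k < n" for k
    proof -
      have "P (k0 + (k + n - k0))" using stepj k0 by blast
      moreover have "k0 + (k + n - k0) = k + n" using k0 that by simp
      moreover have "Suc (k + n) mod n = Suc k mod n" using mod_add_self2[of "Suc k" n] by simp
      ultimately show ?thesis using that unfolding P_def by simp
    qed
    have "m = mm n"
    proof
      show "mm n \<subseteq> m" unfolding mm_def using all by auto
      show "m \<subseteq> mm n"
      proof
        fix p assume p: "p \<in> m"
        obtain x y where xy: "p = (x,y)" by (cases p)
        obtain k where k: "k<n" "x = ed n k" using mfst p xy by blast
        have "p = (ed n k, {Suc k mod n})" using match_fst[OF mt p all[OF k(1)]] xy k by simp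
        thus "p \<in> mm n" unfolding mm_def using k by auto
      qed
    qed
    thus ?thesis by simp
  next
    case False
    have all: "(ed n k, {k}) \<in> m" if kn: "k < n" for k
    proof -
      obtain w where w: "(ed n k, {w}) \<in> m" "w = k \<or> w = Suc k mod n" using M kn by (auto simp: mem_ed)
      have "\<not> P k" using False that by blast
      hence "w \<noteq> Suc k mod n" using w that unfolding P_def by auto
      thus ?thesis using w by auto
    qed
    have "m = mp n"
    proof
      show "mp n \<subseteq> m" unfolding mp_def using all by auto
      show "m \<subseteq> mp n"
      proof
        fix p assume p: "p \<in> m"
        obtain x y where xy: "p = (x,y)" by (cases p)
        obtain k where k: "k<n" "x = ed n k" using mfst p xy by blast
        have "p = (ed n k, {k})" using match_fst[OF mt p all[OF k(1)]] xy k by simp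
        thus "p \<in> mp n" unfolding mp_def using k by auto
      qed
    qed
    thus ?thesis by simp
  qed
qed


lemma match_sub: "is_matching A m \<Longrightarrow> m' \<subseteq> m \<Longrightarrow> is_matching A m'"
  unfolding is_matching_def by blast

lemma J1_char: assumes "is_matching AA m" "Jnum AA m = 1" shows "m = mp n \<or> m = mm n"
  using perfect[OF assms(1) J1_M2[OF assms]] .

lemma mp_match: "is_matching AA (mp n)"
proof -
  have sub: "mp n \<subseteq> AA" unfolding mp_def by (auto simp: fpA)
  have pw: "fst a \<noteq> fst b \<and> fst a \<noteq> snd b \<and> snd a \<noteq> fst b \<and> snd a \<noteq> snd b"
    if a: "a \<in> mp n" and b: "b \<in> mp n" and ab: "a \<noteq> b" for a b
  proof -
    obtain k where k: "k<n" "a = (ed n k, {k})" using a unfolding mp_def by auto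
    obtain j where j: "j<n" "b = (ed n j, {j})" using b unfolding mp_def by auto
    have kj: "k \<noteq> j" using k j ab by auto
    have 1: "ed n k \<noteq> ed n j" using ed_inj[OF k(1) j(1)] kj by auto
    have 2: "ed n k \<noteq> {j}" using sing_ne_ed[OF k(1), of j] by auto
    have 3: "{k} \<noteq> ed n j" using sing_ne_ed[OF j(1), of k] by auto
    show ?thesis using 1 2 3 kj k j by auto
  qed
  show ?thesis unfolding is_matching_def using sub pw by blast
qed

lemma mm_match: "is_matching AA (mm n)"
proof -
  have sub: "mm n \<subseteq> AA" unfolding mm_def by (auto simp: fpA)
  have pw: "fst a \<noteq> fst b \<and> fst a \<noteq> snd b \<and> snd a \<noteq> fst b \<and> snd a \<noteq> snd b"
    if a: "a \<in> mm n" and b: "b \<in> mm n" and ab: "a \<noteq> b" for a b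
  proof -
    obtain k where k: "k<n" "a = (ed n k, {Suc k mod n})" using a unfolding mm_def by auto
    obtain j where j: "j<n" "b = (ed n j, {Suc j mod n})" using b unfolding mm_def by auto
    have kj: "k \<noteq> j" using k j ab by auto
    have 1: "ed n k \<noteq> ed n j" using ed_inj[OF k(1) j(1)] kj by auto
    have 2: "ed n k \<noteq> {Suc j mod n}" using sing_ne_ed[OF k(1), of "Suc j mod n"] by auto
    have 3: "{Suc k mod n} \<noteq> ed n j" using sing_ne_ed[OF j(1), of "Suc k mod n"] by auto
    have 4: "Suc k mod n \<noteq> Suc j mod n" using sk_inj[OF k(1) j(1)] kj by auto
    show ?thesis using 1 2 3 4 k j by auto
  qed
  show ?thesis unfolding is_matching_def using sub pw by blast
qed

lemma mp_ne_mm: "mp n \<noteq> mm n"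
proof
  assume e: "mp n = mm n"
  have n0: "0 < n" using n3 by simp
  have "(ed n 0, {0}) \<in> mp n" unfolding mp_def using n0 by auto
  hence "(ed n 0, {0}) \<in> mm n" using e by simp
  then obtain k where k: "k < n" "ed n 0 = ed n k" "0 = Suc k mod n" unfolding mm_def by auto
  have "k = 0" using ed_inj[OF n0 k(1) k(2)] by simp
  thus False using k(3) sk_ne[OF n0] by simp
qed

lemma card_mp: "card (mp n) = n"
proof -
  have "inj_on (\<lambda>k. (ed n k, {k})) {..<n}" by (auto simp: inj_on_def)
  thus ?thesis unfolding mp_def by (simp add: card_image)
qed

lemma card_mm: "card (mm n) = n"
proof -
  have "inj_on (\<lambda>k. (ed n k, {Suc k mod n})) {..<n}" using ed_inj by (auto simp: inj_on_def)
  thus ?thesis unfolding mm_def by (simp add: card_image)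
qed

lemma Jone: assumes mt: "is_matching AA m" and ex: "\<exists>xs. xs \<noteq> [] \<and> distinct xs \<and> cyc_arcs xs \<subseteq> reversed AA m"
  shows "Jnum AA m = 1"
proof -
  obtain xs where xs: "xs \<noteq> []" "distinct xs" "cyc_arcs xs \<subseteq> reversed AA m" using ex by blast
  have "cyc_arcs xs = reversed AA m" using cyc_eq[OF mt xs(1) xs(3)] .
  hence "reversed AA m \<in> dcycles (reversed AA m)" unfolding dcycles_def using xs by blast
  hence "dcycles (reversed AA m) = {reversed AA m}" using dcyc_sub[OF mt] by blast
  thus ?thesis unfolding Jnum_def by simp
qed

definition NN :: "face set" where "NN = (\<lambda>v. {v}) ` {..<n} \<union> ed n ` {..<n}"

lemma finNN: "finite NN" unfolding NN_def by simp
lemma zNN: "{0} \<in> NN" unfolding NN_def using n3 by auto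

lemma Jmp: "Jnum AA (mp n) = 1"
proof (rule Jone[OF mp_match], rule exists_cycle[OF finNN zNN], rule ballI)
  fix x assume "x \<in> NN"
  then consider (s) v where "v < n" "x = {v}" | (e) k where "k < n" "x = ed n k" unfolding NN_def by auto
  thus "\<exists>y\<in>NN. (x, y) \<in> reversed AA (mp n)"
  proof cases
    case s
    have "(ed n v, {v}) \<in> mp n" unfolding mp_def using s by auto
    hence "(x, ed n v) \<in> reversed AA (mp n)" using s by (simp add: rev_mem)
    moreover have "ed n v \<in> NN" unfolding NN_def using s by auto
    ultimately show ?thesis by blast
  next
    case e
    have "(ed n k, {Suc k mod n}) \<in> AA" using e by (auto simp: fpA)
    moreover have "(ed n k, {Suc k mod n}) \<notin> mp n"
    proof
      assume "(ed n k, {Suc k mod n}) \<in> mp n"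
      then obtain j where j: "j<n" "ed n k = ed n j" "Suc k mod n = j" unfolding mp_def by auto
      have "j = k" using ed_inj[OF j(1) e(1)] j(2) by simp
      thus False using j(3) sk_ne[OF e(1)] by simp
    qed
    ultimately have "(x, {Suc k mod n}) \<in> reversed AA (mp n)" using e by (simp add: rev_mem)
    moreover have "{Suc k mod n} \<in> NN" unfolding NN_def using sk_lt by auto
    ultimately show ?thesis by blast
  qed
qed

lemma Jmm: "Jnum AA (mm n) = 1"
proof (rule Jone[OF mm_match], rule exists_cycle[OF finNN zNN], rule ballI)
  fix x assume "x \<in> NN"
  then consider (s) v where "v < n" "x = {v}" | (e) k where "k < n" "x = ed n k" unfolding NN_def by auto
  thus "\<exists>y\<in>NN. (x, y) \<in> reversed AA (mm n)"
  proof cases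
    case s
    define j where "j = (if v = 0 then n - 1 else v - 1)"
    have j: "j < n" "Suc j mod n = v" using s n3 unfolding j_def by auto
    have "(ed n j, {v}) \<in> mm n" unfolding mm_def using j by force
    hence "(x, ed n j) \<in> reversed AA (mm n)" using s by (simp add: rev_mem)
    moreover have "ed n j \<in> NN" unfolding NN_def using j by auto
    ultimately show ?thesis by blast
  next
    case e
    have "(ed n k, {k}) \<in> AA" using e by (auto simp: fpA)
    moreover have "(ed n k, {k}) \<notin> mm n"
    proof
      assume "(ed n k, {k}) \<in> mm n"
      then obtain j where j: "j<n" "ed n k = ed n j" "k = Suc j mod n" unfolding mm_def by auto
      have "j = k" using ed_inj[OF j(1) e(1)] j(2) by simp
      thus False using j(3) sk_ne[OF e(1)] by simp
    qed
    ultimately have "(x, {k}) \<in> reversed AA (mm n)" using e by (simp add: rev_mem)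
    moreover have "{k} \<in> NN" unfolding NN_def using e by auto
    ultimately show ?thesis by blast
  qed
qed

lemma J_sub0: assumes mt: "is_matching AA s" and e: "e \<in> s" shows "Jnum AA (s - {e}) = 0"
proof -
  have mt': "is_matching AA (s - {e})" using match_sub[OF mt] by blast
  have "Jnum AA (s - {e}) \<noteq> 1"
  proof
    assume "Jnum AA (s - {e}) = 1"
    hence c: "s - {e} = mp n \<or> s - {e} = mm n" using J1_char[OF mt'] by blast
    have "e \<in> AA" using mt e unfolding is_matching_def by auto
    then obtain k y where ky: "k < n" "e = (ed n k, y)" by (cases e) (auto simp: fpA)
    from c show False
    proof
      assume h: "s - {e} = mp n"
      have "(ed n k, {k}) \<in> mp n" unfolding mp_def using ky by auto
      hence "(ed n k, {k}) \<in> s" "(ed n k, {k}) \<noteq> e" using h by auto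
      thus False using match_fst[OF mt e] ky by auto
    next
      assume h: "s - {e} = mm n"
      have "(ed n k, {Suc k mod n}) \<in> mm n" unfolding mm_def using ky by auto
      hence "(ed n k, {Suc k mod n}) \<in> s" "(ed n k, {Suc k mod n}) \<noteq> e" using h by auto
      thus False using match_fst[OF mt e] ky by auto
    qed
  qed
  thus ?thesis using J_le[OF mt'] by simp
qed

end

lemma lin_cong: "(\<And>s. s \<in> c \<Longrightarrow> bd1 s = bd2 s) \<Longrightarrow> lin bd1 c = lin bd2 c"
proof -
  assume h: "\<And>s. s \<in> c \<Longrightarrow> bd1 s = bd2 s"
  have "\<And>x. {s \<in> c. x \<in> bd1 s} = {s \<in> c. x \<in> bd2 s}" using h by auto
  thus ?thesis unfolding lin_def by simp
qed

lemma hom_cong: assumes "\<And>s. s \<in> S \<Longrightarrow> bd1 s = bd2 s"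
  shows "homology S bd1 i = homology S bd2 i"
proof -
  have l: "lin bd1 c = lin bd2 c" if "c \<subseteq> S" for c using assms that by (intro lin_cong) blast
  have Z: "{c. c \<subseteq> {s \<in> S. card s = Suc i} \<and> lin bd1 c = {}} = {c. c \<subseteq> {s \<in> S. card s = Suc i} \<and> lin bd2 c = {}}"
    using l by auto
  have B: "lin bd1 ` Pow {s \<in> S. card s = Suc (Suc i)} = lin bd2 ` Pow {s \<in> S. card s = Suc (Suc i)}"
    using l by (intro image_cong) auto
  show ?thesis unfolding homology_def Let_def Z B ..
qed

lemma hom_triv: assumes fin: "finite S" and z: "\<And>s. s \<in> S \<Longrightarrow> bd s = {}"
  shows "card (homology S bd i) = 2 ^ card {s \<in> S. card s = Suc i}"
proof -
  define T where "T = {s \<in> S. card s = Suc i}"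
  have l: "lin bd c = {}" if "c \<subseteq> S" for c
  proof -
    have e: "{s \<in> c. x \<in> bd s} = {}" for x using z that by auto
    show ?thesis unfolding lin_def e by simp
  qed
  have Z: "{c. c \<subseteq> T \<and> lin bd c = {}} = Pow T" using l unfolding T_def by auto
  have B: "lin bd ` Pow {s \<in> S. card s = Suc (Suc i)} = {{}}" using l by auto
  have sd: "symdiff z {} = z" for z :: "'a set set" unfolding symdiff_def by auto
  have "homology S bd i = (\<lambda>z. {z}) ` Pow T"
    unfolding homology_def Let_def T_def[symmetric] Z B using sd by simp
  moreover have "card ((\<lambda>z. {z}) ` Pow T) = card (Pow T)" by (rule card_image) (auto simp: inj_on_def)
  moreover have "finite T" using fin unfolding T_def by simp
  ultimately show ?thesis using card_Pow T_def by simp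
qed


lemma finMS: assumes n3: "3 \<le> n" shows "finite {m \<in> match_simplices (fp_arcs (cycE n)). P m}"
proof -
  have "{m \<in> match_simplices (fp_arcs (cycE n)). P m} \<subseteq> Pow (fp_arcs (cycE n))"
    unfolding match_simplices_def is_matching_def by auto
  moreover have "finite (Pow (fp_arcs (cycE n)))" using finA[OF n3] by simp
  ultimately show ?thesis by (rule finite_subset)
qed

lemma mtMS: "m \<in> match_simplices A \<Longrightarrow> is_matching A m"
  unfolding match_simplices_def by auto

lemma part1: assumes n3: "3 \<le> n"
  shows "hH (cycE n) i 0 = simp_homology (acyc_simplices (fp_arcs (cycE n))) i"
  unfolding hH_def simp_homology_def acyc_simplices_def
proof (rule hom_cong)
  fix s assume s: "s \<in> {m \<in> match_simplices (fp_arcs (cycE n)). Jnum (fp_arcs (cycE n)) m = 0}"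
  hence mt: "is_matching (fp_arcs (cycE n)) s" and j0: "Jnum (fp_arcs (cycE n)) s = 0"
    using mtMS by auto
  have eq: "Jnum (fp_arcs (cycE n)) (s - {e}) = Jnum (fp_arcs (cycE n)) s" if "e \<in> s" for e
    using J_sub0[OF n3 mt that] j0 by simp
  show "bdJ (fp_arcs (cycE n)) s = simp_bd s" unfolding bdJ_def simp_bd_def using eq by auto
qed

lemma S1eq: assumes n3: "3 \<le> n"
  shows "{m \<in> match_simplices (fp_arcs (cycE n)). Jnum (fp_arcs (cycE n)) m = 1} = {mp n, mm n}"
proof (rule equalityI)
  show "{m \<in> match_simplices (fp_arcs (cycE n)). Jnum (fp_arcs (cycE n)) m = 1} \<subseteq> {mp n, mm n}"
  proof (rule subsetI)
    fix m assume "m \<in> {m \<in> match_simplices (fp_arcs (cycE n)). Jnum (fp_arcs (cycE n)) m = 1}"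
    hence "is_matching (fp_arcs (cycE n)) m" "Jnum (fp_arcs (cycE n)) m = 1" using mtMS by auto
    from J1_char[OF n3 this] show "m \<in> {mp n, mm n}" by simp
  qed
  have "mp n \<noteq> {}" "mm n \<noteq> {}" using card_mp[OF n3] card_mm[OF n3] n3 by auto
  thus "{mp n, mm n} \<subseteq> {m \<in> match_simplices (fp_arcs (cycE n)). Jnum (fp_arcs (cycE n)) m = 1}"
    using mp_match[OF n3] mm_match[OF n3] Jmp[OF n3] Jmm[OF n3]
    unfolding match_simplices_def by simp
qed

lemma bd0: assumes n3: "3 \<le> n" and s: "s \<in> {mp n, mm n}" shows "bdJ (fp_arcs (cycE n)) s = {}"
proof -
  have sc: "s = mp n \<or> s = mm n" using s by simp
  have mt: "is_matching (fp_arcs (cycE n)) s"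
    using sc mp_match[OF n3] mm_match[OF n3] by metis
  have j1: "Jnum (fp_arcs (cycE n)) s = 1" using sc Jmp[OF n3] Jmm[OF n3] by metis
  have cs: "card s = n" using sc card_mp[OF n3] card_mm[OF n3] by metis
  have fs: "finite s" using cs n3 by (intro card_ge_0_finite) simp
  have no: "Jnum (fp_arcs (cycE n)) (s - {e}) \<noteq> 1" if e: "e \<in> s" for e
  proof
    assume je: "Jnum (fp_arcs (cycE n)) (s - {e}) = 1"
    have mt': "is_matching (fp_arcs (cycE n)) (s - {e})" using match_sub[OF n3 mt] by blast
    have "s - {e} = mp n \<or> s - {e} = mm n" using J1_char[OF n3 mt' je] .
    hence "card (s - {e}) = n" using card_mp[OF n3] card_mm[OF n3] by metis
    moreover have "card (s - {e}) = n - 1" using fs e cs by simp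
    ultimately show False using n3 by simp
  qed
  show ?thesis
  proof (rule equals0I)
    fix x assume "x \<in> bdJ (fp_arcs (cycE n)) s"
    then obtain e where e: "e \<in> s" "Jnum (fp_arcs (cycE n)) (s - {e}) = Jnum (fp_arcs (cycE n)) s"
      unfolding bdJ_def by blast
    thus False using no j1 by simp
  qed
qed

lemma part2: assumes n3: "3 \<le> n"
  shows "card (hH (cycE n) i 1) = (if i = n - 1 then 2 ^ 2 else 2 ^ 0)"
proof -
  have "card (hH (cycE n) i 1) = 2 ^ card {s \<in> {mp n, mm n}. card s = Suc i}"
    unfolding hH_def S1eq[OF n3] by (rule hom_triv) (auto simp: bd0[OF n3])
  moreover have "card {s \<in> {mp n, mm n}. card s = Suc i} = (if i = n - 1 then 2 else 0)"
  proof (cases "i = n - 1")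
    case True
    hence "{s \<in> {mp n, mm n}. card s = Suc i} = {mp n, mm n}" using card_mp[OF n3] card_mm[OF n3] n3 by auto
    thus ?thesis using mp_ne_mm[OF n3] True by simp
  next
    case False
    hence "{s \<in> {mp n, mm n}. card s = Suc i} = {}" using card_mp[OF n3] card_mm[OF n3] n3 by auto
    thus ?thesis using False by simp
  qed
  ultimately show ?thesis by simp
qed

lemma part3: assumes n3: "3 \<le> n" and j: "2 \<le> j"
  shows "card (hH (cycE n) i j) = 2 ^ 0"
proof -
  have e: "{m \<in> match_simplices (fp_arcs (cycE n)). Jnum (fp_arcs (cycE n)) m = j} = {}"
  proof (rule equals0I)
    fix m assume "m \<in> {m \<in> match_simplices (fp_arcs (cycE n)). Jnum (fp_arcs (cycE n)) m = j}"
    hence "is_matching (fp_arcs (cycE n)) m" "Jnum (fp_arcs (cycE n)) m = j" using mtMS by auto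
    thus False using J_le[OF n3] j by fastforce
  qed
  have "card (hH (cycE n) i j) = 2 ^ card {s \<in> ({}::arc set set). card s = Suc i}"
    unfolding hH_def e by (rule hom_triv) auto
  thus ?thesis by simp
qed

theorem mainTheorem9:
  fixes n :: nat
  assumes "n \<ge> 3"
  shows "(\<forall>i. card (hH (cycE n) i 0) = card (simp_homology (acyc_simplices (fp_arcs (cycE n))) i))
       \<and> (\<forall>i. card (hH (cycE n) i 1) = (if i = n - 1 then 2 ^ 2 else 2 ^ 0))
       \<and> (\<forall>i j. j \<ge> 2 \<longrightarrow> card (hH (cycE n) i j) = 2 ^ 0)"
  using part1[OF assms] part2[OF assms] part3[OF assms] by simp

end
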